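(* Let $n$ be a positive integer and $\mathscr{R}$ a type $I_n$ von Neumann algebra. Then the set $\mathcal{S}(\mathscr{R})^4$ of unitaries in $\mathscr{R}$ that can be written as a product of four symmetries in $\mathscr{R}$ is not norm-dense in the unitary group $\mathcal{U}(\mathscr{R})$ of $\mathscr{R}$.
   Context: A symmetry is a self-adjoint unitary. For a von Neumann algebra $\mathscr{M}$ and $k \in \mathbb{N}$, $\mathcal{S}(\mathscr{M})^k$ denotes the set of unitaries in $\mathscr{M}$ that are products of $k$ symmetries in $\mathscr{M}$, and $\mathcal{U}(\mathscr{M})$ denotes the unitary group of $\mathscr{M}$. *)

theory Defs
  imports "HOL-Analysis.Analysis"
begin

text \<open>Concrete complex Hilbert spaces: every complex Hilbert space is unitarily
  isomorphic to l2(I) for an index set I (given by an orthonormal basis), so we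
  work on l2 over an arbitrary index type 'i.\<close>

type_synonym 'i vec = "'i \<Rightarrow> complex"
type_synonym 'i op = "'i vec \<Rightarrow> 'i vec"

definition l2 :: "'i vec set" where
  "l2 = {x. (\<lambda>i. (cmod (x i))\<^sup>2) summable_on UNIV}"

definition l2norm :: "'i vec \<Rightarrow> real" where
  "l2norm x = sqrt (infsum (\<lambda>i. (cmod (x i))\<^sup>2) UNIV)"

definition cinner :: "'i vec \<Rightarrow> 'i vec \<Rightarrow> complex" where
  "cinner x y = infsum (\<lambda>i. cnj (x i) * y i) UNIV"

text \<open>Bounded linear operators on l2(I).  Canonical representative: an operator
  maps every non-l2 function to 0, so that operators are equal iff equal on l2.\<close>

definition bounded_ops :: "'i op set" where
  "bounded_ops = {T.
      (\<forall>x\<in>l2. T x \<in> l2) \<and>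
      (\<forall>x. x \<notin> l2 \<longrightarrow> T x = (\<lambda>i. 0)) \<and>
      (\<forall>x\<in>l2. \<forall>y\<in>l2. \<forall>c::complex. T (\<lambda>i. c * x i + y i) = (\<lambda>i. c * T x i + T y i)) \<and>
      (\<exists>K. \<forall>x\<in>l2. l2norm (T x) \<le> K * l2norm x)}"

definition idop :: "'i op" where
  "idop x = (if x \<in> l2 then x else (\<lambda>i. 0))"

definition zeroop :: "'i op" where
  "zeroop x = (\<lambda>i. 0)"

definition opnorm :: "'i op \<Rightarrow> real" where
  "opnorm T = (SUP x\<in>{x\<in>l2. l2norm x \<le> 1}. l2norm (T x))"

definition op_diff :: "'i op \<Rightarrow> 'i op \<Rightarrow> 'i op" where
  "op_diff S T = (\<lambda>x i. S x i - T x i)"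

definition is_adjoint :: "'i op \<Rightarrow> 'i op \<Rightarrow> bool" where
  "is_adjoint T S \<longleftrightarrow> (\<forall>x\<in>l2. \<forall>y\<in>l2. cinner (T x) y = cinner x (S y))"

definition adj :: "'i op \<Rightarrow> 'i op" where
  "adj T = (THE S. S \<in> bounded_ops \<and> is_adjoint T S)"

definition commutant :: "'i op set \<Rightarrow> 'i op set" where
  "commutant M = {T \<in> bounded_ops. \<forall>S\<in>M. T \<circ> S = S \<circ> T}"

definition von_neumann_algebra :: "'i op set \<Rightarrow> bool" where
  "von_neumann_algebra M \<longleftrightarrow>
     M \<subseteq> bounded_ops \<and> idop \<in> M \<and>
     (\<forall>T\<in>M. adj T \<in> M) \<and>
     (\<forall>S\<in>M. \<forall>T\<in>M. S \<circ> T \<in> M) \<and>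
     (\<forall>S\<in>M. \<forall>T\<in>M. \<forall>c::complex. (\<lambda>x i. c * S x i + T x i) \<in> M) \<and>
     commutant (commutant M) = M"

definition unitaries :: "'i op set \<Rightarrow> 'i op set" where
  "unitaries M = {U \<in> M. adj U \<circ> U = idop \<and> U \<circ> adj U = idop}"

definition symmetries :: "'i op set \<Rightarrow> 'i op set" where
  "symmetries M = {U \<in> unitaries M. adj U = U}"

definition sym_products :: "'i op set \<Rightarrow> nat \<Rightarrow> 'i op set" where
  "sym_products M k =
     {foldr (\<circ>) ss idop | ss. length ss = k \<and> set ss \<subseteq> symmetries M}"

definition is_projection :: "'i op set \<Rightarrow> 'i op \<Rightarrow> bool" where
  "is_projection M E \<longleftrightarrow> E \<in> M \<and> adj E = E \<and> E \<circ> E = E"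

definition abelian_projection :: "'i op set \<Rightarrow> 'i op \<Rightarrow> bool" where
  "abelian_projection M E \<longleftrightarrow> is_projection M E \<and>
     (\<forall>A\<in>M. \<forall>B\<in>M. (E \<circ> A \<circ> E) \<circ> (E \<circ> B \<circ> E) = (E \<circ> B \<circ> E) \<circ> (E \<circ> A \<circ> E))"

definition mvn_equiv :: "'i op set \<Rightarrow> 'i op \<Rightarrow> 'i op \<Rightarrow> bool" where
  "mvn_equiv M E F \<longleftrightarrow> (\<exists>V\<in>M. adj V \<circ> V = E \<and> V \<circ> adj V = F)"

definition type_I_n :: "nat \<Rightarrow> 'i op set \<Rightarrow> bool" where
  "type_I_n n M \<longleftrightarrow> von_neumann_algebra M \<and>
     (\<exists>E :: nat \<Rightarrow> 'i op.
        (\<forall>k<n. abelian_projection M (E k)) \<and>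
        (\<forall>j<n. \<forall>k<n. j \<noteq> k \<longrightarrow> E j \<circ> E k = zeroop) \<and>
        (\<forall>j<n. \<forall>k<n. mvn_equiv M (E j) (E k)) \<and>
        (\<lambda>x i. \<Sum>k<n. E k x i) = idop)"

definition norm_dense_in :: "'i op set \<Rightarrow> 'i op set \<Rightarrow> bool" where
  "norm_dense_in A B \<longleftrightarrow> (\<forall>U\<in>B. \<forall>e>0. \<exists>V\<in>A. opnorm (op_diff U V) < e)"

end

theory Submission
  imports Defs "Jordan_Normal_Form.Determinant"
begin


lemma l2_zero[simp]: "(\<lambda>i. 0) \<in> l2"
  unfolding l2_def by simp

lemma l2_comb:
  assumes x: "x \<in> l2" and y: "y \<in> l2"
  shows "(\<lambda>i. c * x i + y i) \<in> l2"
proof -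
  have sx: "(\<lambda>i. (cmod (x i))\<^sup>2) summable_on UNIV" using x unfolding l2_def by simp
  have sy: "(\<lambda>i. (cmod (y i))\<^sup>2) summable_on UNIV" using y unfolding l2_def by simp
  have s: "(\<lambda>i. 2 * (cmod c)\<^sup>2 * (cmod (x i))\<^sup>2 + 2 * (cmod (y i))\<^sup>2) summable_on UNIV"
    by (intro summable_on_add summable_on_cmult_right sx sy)
  have le: "(cmod (c * x i + y i))\<^sup>2 \<le> 2 * (cmod c)\<^sup>2 * (cmod (x i))\<^sup>2 + 2 * (cmod (y i))\<^sup>2" for i
  proof -
    have "cmod (c * x i + y i) \<le> cmod c * cmod (x i) + cmod (y i)"
      by (metis norm_mult norm_triangle_ineq)
    hence "(cmod (c * x i + y i))\<^sup>2 \<le> (cmod c * cmod (x i) + cmod (y i))\<^sup>2"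
      by (simp add: power_mono)
    also have "\<dots> \<le> 2 * (cmod c)\<^sup>2 * (cmod (x i))\<^sup>2 + 2 * (cmod (y i))\<^sup>2"
    proof -
      have "0 \<le> (cmod c * cmod (x i) - cmod (y i))\<^sup>2" by simp
      thus ?thesis by (simp add: power2_eq_square algebra_simps)
    qed
    finally show ?thesis .
  qed
  show ?thesis unfolding l2_def mem_Collect_eq
    by (rule summable_on_comparison_test[OF s]) (auto intro: le)
qed

lemma l2_add: "x \<in> l2 \<Longrightarrow> y \<in> l2 \<Longrightarrow> (\<lambda>i. x i + y i) \<in> l2"
  using l2_comb[of x y 1] by simp

lemma l2_scale: "x \<in> l2 \<Longrightarrow> (\<lambda>i. c * x i) \<in> l2"
  using l2_comb[of x "\<lambda>i. 0" c] by simp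

lemma l2norm_nonneg[simp]: "0 \<le> l2norm x"
  unfolding l2norm_def by (simp add: infsum_nonneg)

lemma l2norm_zero[simp]: "l2norm (\<lambda>i. 0) = 0"
  unfolding l2norm_def by simp

lemma l2norm_scale: "l2norm (\<lambda>i. c * x i) = cmod c * l2norm x"
proof -
  have "(\<Sum>\<^sub>\<infinity>i. (cmod (c * x i))\<^sup>2) = (cmod c)\<^sup>2 * (\<Sum>\<^sub>\<infinity>i. (cmod (x i))\<^sup>2)"
    by (simp add: norm_mult power_mult_distrib infsum_cmult_right')
  thus ?thesis unfolding l2norm_def by (simp add: real_sqrt_mult)
qed

lemma l2norm_eq0:
  assumes x: "x \<in> l2" and z: "l2norm x = 0"
  shows "x = (\<lambda>i. 0)"
proof
  fix j
  have sx: "(\<lambda>i. (cmod (x i))\<^sup>2) summable_on UNIV" using x unfolding l2_def by simp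
  have "(\<Sum>\<^sub>\<infinity>i. (cmod (x i))\<^sup>2) = 0" using z unfolding l2norm_def
    by (metis infsum_nonneg real_sqrt_eq_zero_cancel_iff zero_le_power2)
  moreover have "sum (\<lambda>i. (cmod (x i))\<^sup>2) {j} \<le> (\<Sum>\<^sub>\<infinity>i. (cmod (x i))\<^sup>2)"
    by (rule finite_sum_le_infsum[OF sx]) auto
  ultimately have "(cmod (x j))\<^sup>2 \<le> 0" by simp
  thus "x j = 0" by simp
qed

lemma l2norm_triangle:
  assumes x: "x \<in> l2" and y: "y \<in> l2"
  shows "l2norm (\<lambda>i. x i + y i) \<le> l2norm x + l2norm y"
proof -
  have sx: "(\<lambda>i. (cmod (x i))\<^sup>2) summable_on UNIV" using x unfolding l2_def by simp
  have sy: "(\<lambda>i. (cmod (y i))\<^sup>2) summable_on UNIV" using y unfolding l2_def by simp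
  have sxy: "(\<lambda>i. (cmod (x i + y i))\<^sup>2) summable_on UNIV" using l2_add[OF x y] unfolding l2_def by simp
  have fin: "sum (\<lambda>i. (cmod (x i + y i))\<^sup>2) F \<le> (l2norm x + l2norm y)\<^sup>2" if F: "finite F" for F
  proof -
    have "L2_set (\<lambda>i. cmod (x i + y i)) F \<le> L2_set (\<lambda>i. cmod (x i) + cmod (y i)) F"
      by (rule L2_set_mono) (auto intro: norm_triangle_ineq)
    also have "\<dots> \<le> L2_set (\<lambda>i. cmod (x i)) F + L2_set (\<lambda>i. cmod (y i)) F"
      by (rule L2_set_triangle_ineq)
    also have "L2_set (\<lambda>i. cmod (x i)) F \<le> l2norm x"
      unfolding L2_set_def l2norm_def
      by (rule real_sqrt_le_mono, rule finite_sum_le_infsum[OF sx F]) auto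
    also have "L2_set (\<lambda>i. cmod (y i)) F \<le> l2norm y"
      unfolding L2_set_def l2norm_def
      by (rule real_sqrt_le_mono, rule finite_sum_le_infsum[OF sy F]) auto
    finally have "sqrt (sum (\<lambda>i. (cmod (x i + y i))\<^sup>2) F) \<le> l2norm x + l2norm y"
      unfolding L2_set_def by simp
    moreover have S0: "0 \<le> sum (\<lambda>i. (cmod (x i + y i))\<^sup>2) F" by (rule sum_nonneg) simp
    ultimately have "(sqrt (sum (\<lambda>i. (cmod (x i + y i))\<^sup>2) F))\<^sup>2 \<le> (l2norm x + l2norm y)\<^sup>2"
      by (intro power_mono) auto
    thus ?thesis using S0 by simp
  qed
  have "(\<Sum>\<^sub>\<infinity>i. (cmod (x i + y i))\<^sup>2) \<le> (l2norm x + l2norm y)\<^sup>2"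
    by (rule infsum_le_finite_sums[OF sxy]) (simp add: fin)
  hence "sqrt (\<Sum>\<^sub>\<infinity>i. (cmod (x i + y i))\<^sup>2) \<le> sqrt ((l2norm x + l2norm y)\<^sup>2)"
    by (rule real_sqrt_le_mono)
  thus ?thesis unfolding l2norm_def[of "\<lambda>i. x i + y i"] by simp
qed

definition ev :: "'i \<Rightarrow> 'i \<Rightarrow> complex" where "ev j = (\<lambda>i. if i = j then 1 else 0)"

lemma ev_l2: "ev j \<in> l2"
proof -
  have "(\<lambda>i. (cmod (ev j i))\<^sup>2) summable_on UNIV \<longleftrightarrow> (\<lambda>i. (cmod (ev j i))\<^sup>2) summable_on {j}"
    by (rule summable_on_cong_neutral) (auto simp: ev_def)
  thus ?thesis unfolding l2_def by (simp add: summable_on_finite)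
qed

lemma ev_nonzero: "ev j \<noteq> (\<lambda>i. 0)"
  by (metis ev_def one_neq_zero)

lemma cinner_ev: "cinner (ev j) y = y j"
proof -
  have "cinner (ev j) y = (\<Sum>\<^sub>\<infinity>i\<in>{j}. cnj (ev j i) * y i)"
    unfolding cinner_def by (rule infsum_cong_neutral) (auto simp: ev_def)
  thus ?thesis by (simp add: ev_def)
qed
section \<open>Bounded operators\<close>

definition oplus :: "'i op \<Rightarrow> 'i op \<Rightarrow> 'i op" where
  "oplus S T = (\<lambda>x i. S x i + T x i)"
definition osc :: "complex \<Rightarrow> 'i op \<Rightarrow> 'i op" where
  "osc c S = (\<lambda>x i. c * S x i)"

lemma bo_l2: "T \<in> bounded_ops \<Longrightarrow> T x \<in> l2"
  unfolding bounded_ops_def by (cases "x \<in> l2") auto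

lemma bo_nl2: "T \<in> bounded_ops \<Longrightarrow> x \<notin> l2 \<Longrightarrow> T x = (\<lambda>i. 0)"
  unfolding bounded_ops_def by auto

lemma bo_lin: "T \<in> bounded_ops \<Longrightarrow> x \<in> l2 \<Longrightarrow> y \<in> l2 \<Longrightarrow>
   T (\<lambda>i. c * x i + y i) = (\<lambda>i. c * T x i + T y i)"
  unfolding bounded_ops_def by blast

lemma bo_zero: assumes "T \<in> bounded_ops" shows "T (\<lambda>i. 0) = (\<lambda>i. 0)"
proof -
  have "T (\<lambda>i. 1 * 0 + 0) = (\<lambda>i. 1 * T (\<lambda>i. 0) i + T (\<lambda>i. 0) i)"
    by (rule bo_lin[OF assms]) auto
  hence eq: "T (\<lambda>i. 0) = (\<lambda>i. T (\<lambda>i. 0) i + T (\<lambda>i. 0) i)" by simp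
  have "T (\<lambda>i. 0) j = 0" for j using fun_cong[OF eq, of j] by simp
  thus ?thesis by (rule ext)
qed

lemma bo_add: "T \<in> bounded_ops \<Longrightarrow> x \<in> l2 \<Longrightarrow> y \<in> l2 \<Longrightarrow>
   T (\<lambda>i. x i + y i) = (\<lambda>i. T x i + T y i)"
  using bo_lin[of T x y 1] by simp

lemma bo_scale: "T \<in> bounded_ops \<Longrightarrow> x \<in> l2 \<Longrightarrow> T (\<lambda>i. c * x i) = (\<lambda>i. c * T x i)"
  using bo_lin[of T x "\<lambda>i. 0" c] bo_zero[of T] by simp

lemma bo_bound: "T \<in> bounded_ops \<Longrightarrow> \<exists>K. \<forall>x\<in>l2. l2norm (T x) \<le> K * l2norm x"
  unfolding bounded_ops_def by blast

lemma ball_ne: "{x\<in>l2. l2norm x \<le> 1} \<noteq> {}"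
proof -
  have "(\<lambda>i. 0) \<in> {x\<in>l2. l2norm x \<le> 1}" by simp
  thus ?thesis by blast
qed

lemma opnorm_bdd: assumes "T \<in> bounded_ops"
  shows "bdd_above ((\<lambda>x. l2norm (T x)) ` {x\<in>l2. l2norm x \<le> 1})"
proof -
  obtain K where K: "\<forall>x\<in>l2. l2norm (T x) \<le> K * l2norm x" using bo_bound[OF assms] by blast
  have "l2norm (T x) \<le> \<bar>K\<bar>" if "x \<in> l2" "l2norm x \<le> 1" for x
  proof -
    have "l2norm (T x) \<le> K * l2norm x" using K that by blast
    also have "\<dots> \<le> \<bar>K\<bar> * l2norm x" by (simp add: mult_right_mono)
    also have "\<dots> \<le> \<bar>K\<bar>" using that by (simp add: mult_left_le)
    finally show ?thesis .
  qed
  thus ?thesis by (intro bdd_aboveI2[where M="\<bar>K\<bar>"]) auto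
qed

lemma opnorm_upper: "T \<in> bounded_ops \<Longrightarrow> x \<in> l2 \<Longrightarrow> l2norm x \<le> 1 \<Longrightarrow> l2norm (T x) \<le> opnorm T"
  unfolding opnorm_def by (rule cSUP_upper[OF _ opnorm_bdd]) auto

lemma opnorm_nonneg: "T \<in> bounded_ops \<Longrightarrow> 0 \<le> opnorm T"
  using opnorm_upper[of T "\<lambda>i. 0"] bo_zero[of T] by simp

lemma opnorm_bound:
  assumes T: "T \<in> bounded_ops" and x: "x \<in> l2"
  shows "l2norm (T x) \<le> opnorm T * l2norm x"
proof (cases "l2norm x = 0")
  case True
  then have "x = (\<lambda>i. 0)" using l2norm_eq0 x by blast
  then show ?thesis using bo_zero[OF T] by simp
next
  case False
  then have pos: "l2norm x > 0" using l2norm_nonneg[of x] by linarith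
  let ?c = "complex_of_real (1 / l2norm x)"
  have y: "(\<lambda>i. ?c * x i) \<in> l2" using l2_scale[OF x] .
  have "l2norm (\<lambda>i. ?c * x i) = cmod ?c * l2norm x" by (rule l2norm_scale)
  hence ny: "l2norm (\<lambda>i. ?c * x i) = 1" using pos by (simp add: norm_divide)
  have "l2norm (T (\<lambda>i. ?c * x i)) \<le> opnorm T" using opnorm_upper[OF T y] ny by simp
  moreover have "l2norm (T (\<lambda>i. ?c * x i)) = cmod ?c * l2norm (T x)"
    unfolding bo_scale[OF T x] by (rule l2norm_scale)
  moreover have "cmod ?c = 1 / l2norm x" using pos by (simp add: norm_divide)
  ultimately have "l2norm (T x) / l2norm x \<le> opnorm T" by simp
  thus ?thesis using pos by (simp add: divide_le_eq mult.commute)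
qed

lemma opnorm_le:
  fixes T :: "'i op"
  assumes "\<And>x. x \<in> l2 \<Longrightarrow> l2norm (T x) \<le> K * l2norm x" and "0 \<le> K"
  shows "opnorm T \<le> K"
  unfolding opnorm_def
proof (rule cSUP_least[OF ball_ne])
  fix x :: "'i \<Rightarrow> complex" assume "x \<in> {x\<in>l2. l2norm x \<le> 1}"
  then have "x \<in> l2" "l2norm x \<le> 1" by auto
  then have "l2norm (T x) \<le> K * l2norm x" using assms by blast
  also have "\<dots> \<le> K" using \<open>l2norm x \<le> 1\<close> \<open>0 \<le> K\<close> by (simp add: mult_left_le)
  finally show "l2norm (T x) \<le> K" .
qed

lemma opnorm_add: fixes S T :: "'i op" assumes S: "S \<in> bounded_ops" and T: "T \<in> bounded_ops"
  shows "opnorm (oplus S T) \<le> opnorm S + opnorm T"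
proof (rule opnorm_le)
  fix x :: "'i \<Rightarrow> complex" assume x: "x \<in> l2"
  have "l2norm (oplus S T x) \<le> l2norm (S x) + l2norm (T x)"
    unfolding oplus_def by (rule l2norm_triangle[OF bo_l2[OF S] bo_l2[OF T]])
  also have "\<dots> \<le> opnorm S * l2norm x + opnorm T * l2norm x"
    by (intro add_mono opnorm_bound S T x)
  finally show "l2norm (oplus S T x) \<le> (opnorm S + opnorm T) * l2norm x" by (simp add: algebra_simps)
qed (simp add: opnorm_nonneg S T)

lemma opnorm_comp: fixes S T :: "'i op" assumes S: "S \<in> bounded_ops" and T: "T \<in> bounded_ops"
  shows "opnorm (S \<circ> T) \<le> opnorm S * opnorm T"
proof (rule opnorm_le)
  fix x :: "'i \<Rightarrow> complex" assume x: "x \<in> l2"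
  have "l2norm ((S \<circ> T) x) \<le> opnorm S * l2norm (T x)"
    using opnorm_bound[OF S bo_l2[OF T]] by simp
  also have "\<dots> \<le> opnorm S * (opnorm T * l2norm x)"
    by (intro mult_left_mono opnorm_bound T x opnorm_nonneg S)
  finally show "l2norm ((S \<circ> T) x) \<le> opnorm S * opnorm T * l2norm x" by (simp add: algebra_simps)
qed (simp add: opnorm_nonneg S T)

lemma opnorm_osc: fixes T :: "'i op" assumes T: "T \<in> bounded_ops"
  shows "opnorm (osc c T) \<le> cmod c * opnorm T"
proof (rule opnorm_le)
  fix x :: "'i \<Rightarrow> complex" assume x: "x \<in> l2"
  have "l2norm (osc c T x) = cmod c * l2norm (T x)"
    unfolding osc_def by (simp add: l2norm_scale)
  also have "\<dots> \<le> cmod c * (opnorm T * l2norm x)"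
    by (intro mult_left_mono opnorm_bound T x) simp
  finally show "l2norm (osc c T x) \<le> cmod c * opnorm T * l2norm x" by (simp add: algebra_simps)
qed (simp add: opnorm_nonneg T)

lemma opnorm_pos:
  assumes T: "T \<in> bounded_ops" and x: "x \<in> l2" and nz: "T x \<noteq> (\<lambda>i. 0)"
  shows "0 < opnorm T"
proof (rule ccontr)
  assume "\<not> 0 < opnorm T"
  then have "opnorm T = 0" using opnorm_nonneg[OF T] by simp
  then have "l2norm (T x) \<le> 0" using opnorm_bound[OF T x] by simp
  then have "l2norm (T x) = 0" using l2norm_nonneg[of "T x"] by linarith
  then show False using l2norm_eq0[OF bo_l2[OF T]] nz by blast
qed

lemma comp_idop_left: "T \<in> bounded_ops \<Longrightarrow> idop \<circ> T = T"
  by (rule ext) (simp add: idop_def bo_l2)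

lemma comp_idop_right: "T \<in> bounded_ops \<Longrightarrow> T \<circ> idop = T"
  by (rule ext) (simp add: idop_def bo_zero bo_nl2)

lemma comp_zero_right: "T \<in> bounded_ops \<Longrightarrow> T \<circ> zeroop = zeroop"
  by (rule ext) (simp add: zeroop_def bo_zero)

lemma comp_zero_left: "zeroop \<circ> T = zeroop"
  by (rule ext) (simp add: zeroop_def)

lemma comp_oplus_right: "S \<in> bounded_ops \<Longrightarrow> A \<in> bounded_ops \<Longrightarrow> B \<in> bounded_ops \<Longrightarrow>
  S \<circ> oplus A B = oplus (S \<circ> A) (S \<circ> B)"
  by (rule ext) (simp add: oplus_def bo_add bo_l2)

lemma comp_osc_right: "S \<in> bounded_ops \<Longrightarrow> A \<in> bounded_ops \<Longrightarrow>
  S \<circ> osc c A = osc c (S \<circ> A)"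
  by (rule ext) (simp add: osc_def bo_scale bo_l2)

lemma sum_l2: "finite F \<Longrightarrow> (\<And>l. l \<in> F \<Longrightarrow> v l \<in> l2) \<Longrightarrow> (\<lambda>i. \<Sum>l\<in>F. v l i) \<in> l2"
proof (induction F rule: finite_induct)
  case (insert a F)
  then show ?case using l2_add[of "v a" "\<lambda>i. \<Sum>l\<in>F. v l i"] by simp
qed simp

lemma comp_sum_right:
  assumes S: "S \<in> bounded_ops" and A: "\<And>l. l \<in> F \<Longrightarrow> A l \<in> bounded_ops" and F: "finite F"
  shows "S \<circ> (\<lambda>x i. \<Sum>l\<in>F. A l x i) = (\<lambda>x i. \<Sum>l\<in>F. S (A l x) i)"
  using F A
proof (induction F rule: finite_induct)
  case empty
  then show ?case using bo_zero[OF S] by (simp add: o_def)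
next
  case (insert a F)
  have inl2: "(\<lambda>i. \<Sum>l\<in>F. A l x i) \<in> l2" for x
    by (rule sum_l2[OF insert.hyps(1)]) (simp add: insert.prems bo_l2)
  have "(S \<circ> (\<lambda>x i. \<Sum>l\<in>insert a F. A l x i)) x = (\<lambda>i. \<Sum>l\<in>insert a F. S (A l x) i)" for x
  proof -
    have "(S \<circ> (\<lambda>x i. \<Sum>l\<in>insert a F. A l x i)) x = S (\<lambda>i. A a x i + (\<Sum>l\<in>F. A l x i))"
      using insert.hyps by simp
    also have "\<dots> = (\<lambda>i. S (A a x) i + S (\<lambda>i. \<Sum>l\<in>F. A l x i) i)"
      by (rule bo_add[OF S bo_l2 inl2]) (simp add: insert.prems)
    also have "S (\<lambda>i. \<Sum>l\<in>F. A l x i) = (\<lambda>i. \<Sum>l\<in>F. S (A l x) i)"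
      using insert.IH insert.prems by (simp add: fun_eq_iff)
    finally show ?thesis using insert.hyps by simp
  qed
  then show ?case by (rule ext)
qed


section \<open>A commutative ring type collecting all commutative operator rings\<close>

definition goodk :: "'i op set \<times> 'i op \<Rightarrow> bool" where
  "goodk k \<longleftrightarrow> snd k \<in> fst k \<and> zeroop \<in> fst k \<and>
     (\<forall>a\<in>fst k. \<forall>b\<in>fst k. oplus a b \<in> fst k \<and> a \<circ> b \<in> fst k \<and> a \<circ> b = b \<circ> a) \<and>
     (\<forall>a\<in>fst k. osc (-1) a \<in> fst k \<and> snd k \<circ> a = a \<and> a \<circ> zeroop = zeroop) \<and>
     (\<forall>a\<in>fst k. \<forall>b\<in>fst k. \<forall>c\<in>fst k. a \<circ> oplus b c = oplus (a \<circ> b) (a \<circ> c))"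

typedef 'i cr = "{f :: 'i op set \<times> 'i op \<Rightarrow> 'i op.
   \<forall>k. (goodk k \<longrightarrow> f k \<in> fst k) \<and> (\<not> goodk k \<longrightarrow> f k = zeroop)}"
  by (rule exI[of _ "\<lambda>k. zeroop"]) (auto simp: goodk_def)

lemma zeroop_eq: "zeroop = (\<lambda>x i. 0)"
  by (rule ext) (simp add: zeroop_def)

lemma zz_oplus[simp]: "oplus zeroop zeroop = zeroop"
  by (simp add: oplus_def zeroop_eq)
lemma zz_comp[simp]: "zeroop \<circ> zeroop = zeroop"
  by (simp add: zeroop_eq o_def)
lemma zz_osc[simp]: "osc c zeroop = zeroop"
  by (simp add: osc_def zeroop_eq)

lemma good_unit: "goodk k \<Longrightarrow> snd k \<in> fst k"
  unfolding goodk_def by blast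
lemma good_zero: "goodk k \<Longrightarrow> zeroop \<in> fst k"
  unfolding goodk_def by blast
lemma good_oplus: "goodk k \<Longrightarrow> a \<in> fst k \<Longrightarrow> b \<in> fst k \<Longrightarrow> oplus a b \<in> fst k"
  unfolding goodk_def by blast
lemma good_comp: "goodk k \<Longrightarrow> a \<in> fst k \<Longrightarrow> b \<in> fst k \<Longrightarrow> a \<circ> b \<in> fst k"
  unfolding goodk_def by blast
lemma good_comm: "goodk k \<Longrightarrow> a \<in> fst k \<Longrightarrow> b \<in> fst k \<Longrightarrow> a \<circ> b = b \<circ> a"
  unfolding goodk_def by blast
lemma good_neg: "goodk k \<Longrightarrow> a \<in> fst k \<Longrightarrow> osc (-1) a \<in> fst k"
  unfolding goodk_def by blast
lemma good_unitl: "goodk k \<Longrightarrow> a \<in> fst k \<Longrightarrow> snd k \<circ> a = a"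
  unfolding goodk_def by blast
lemma good_zr: "goodk k \<Longrightarrow> a \<in> fst k \<Longrightarrow> a \<circ> zeroop = zeroop"
  unfolding goodk_def by blast

lemma Rep_cr_good: "goodk k \<Longrightarrow> Rep_cr f k \<in> fst k"
  using Rep_cr[of f] unfolding mem_Collect_eq by blast
lemma Rep_cr_bad: "\<not> goodk k \<Longrightarrow> Rep_cr f k = zeroop"
  using Rep_cr[of f] unfolding mem_Collect_eq by blast

lemma Abs_cr_inverse':
  assumes "\<And>k. goodk k \<Longrightarrow> g k \<in> fst k" "\<And>k. \<not> goodk k \<Longrightarrow> g k = zeroop"
  shows "Rep_cr (Abs_cr g) = g"
  by (rule Abs_cr_inverse) (use assms in blast)

lemma cr_eqI: "(\<And>k. goodk k \<Longrightarrow> Rep_cr f k = Rep_cr g k) \<Longrightarrow> f = g"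
  by (metis Rep_cr_bad Rep_cr_inject ext)

instantiation cr :: (type) comm_ring_1
begin

definition zero_cr_def: "0 = Abs_cr (\<lambda>k. zeroop)"
definition one_cr_def: "1 = Abs_cr (\<lambda>k. if goodk k then snd k else zeroop)"
definition plus_cr_def: "f + g = Abs_cr (\<lambda>k. oplus (Rep_cr f k) (Rep_cr g k))"
definition times_cr_def: "f * g = Abs_cr (\<lambda>k. Rep_cr f k \<circ> Rep_cr g k)"
definition uminus_cr_def: "- f = Abs_cr (\<lambda>k. osc (-1) (Rep_cr f k))"
definition minus_cr_def: "f - g = Abs_cr (\<lambda>k. oplus (Rep_cr f k) (osc (-1) (Rep_cr g k)))"

lemma Rep_zero: "Rep_cr 0 k = zeroop"
proof -
  have "Rep_cr (Abs_cr (\<lambda>k. zeroop) :: 'a cr) = (\<lambda>k. zeroop)"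
    by (rule Abs_cr_inverse') (simp_all add: good_zero)
  thus ?thesis unfolding zero_cr_def by simp
qed
lemma Rep_one: "Rep_cr 1 k = (if goodk k then snd k else zeroop)"
proof -
  have "Rep_cr (Abs_cr (\<lambda>k. if goodk k then snd k else zeroop) :: 'a cr) = (\<lambda>k. if goodk k then snd k else zeroop)"
    by (rule Abs_cr_inverse') (simp_all add: good_unit)
  thus ?thesis unfolding one_cr_def by simp
qed
lemma Rep_plus: "Rep_cr (f + g) k = oplus (Rep_cr f k) (Rep_cr g k)"
proof -
  have "Rep_cr (Abs_cr (\<lambda>k. oplus (Rep_cr f k) (Rep_cr g k))) = (\<lambda>k. oplus (Rep_cr f k) (Rep_cr g k))"
    by (rule Abs_cr_inverse') (simp_all add: good_oplus Rep_cr_good Rep_cr_bad)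
  thus ?thesis unfolding plus_cr_def by simp
qed
lemma Rep_times: "Rep_cr (f * g) k = Rep_cr f k \<circ> Rep_cr g k"
proof -
  have "Rep_cr (Abs_cr (\<lambda>k. Rep_cr f k \<circ> Rep_cr g k)) = (\<lambda>k. Rep_cr f k \<circ> Rep_cr g k)"
    by (rule Abs_cr_inverse') (simp_all add: good_comp Rep_cr_good Rep_cr_bad)
  thus ?thesis unfolding times_cr_def by simp
qed
lemma Rep_uminus: "Rep_cr (- f) k = osc (-1) (Rep_cr f k)"
proof -
  have "Rep_cr (Abs_cr (\<lambda>k. osc (-1) (Rep_cr f k))) = (\<lambda>k. osc (-1) (Rep_cr f k))"
    by (rule Abs_cr_inverse') (simp_all add: good_neg Rep_cr_good Rep_cr_bad)
  thus ?thesis unfolding uminus_cr_def by simp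
qed
lemma Rep_minus: "Rep_cr (f - g) k = oplus (Rep_cr f k) (osc (-1) (Rep_cr g k))"
proof -
  have "Rep_cr (Abs_cr (\<lambda>k. oplus (Rep_cr f k) (osc (-1) (Rep_cr g k)))) = (\<lambda>k. oplus (Rep_cr f k) (osc (-1) (Rep_cr g k)))"
    by (rule Abs_cr_inverse') (simp_all add: good_oplus good_neg Rep_cr_good Rep_cr_bad)
  thus ?thesis unfolding minus_cr_def by simp
qed

lemmas Rep_ops = Rep_zero Rep_one Rep_plus Rep_times Rep_uminus Rep_minus

instance
proof
  fix a b c :: "'a cr"
  show "a * b * c = a * (b * c)" by (rule cr_eqI) (simp add: Rep_ops o_assoc)
  show "a * b = b * a" by (rule cr_eqI) (metis Rep_times good_comm Rep_cr_good)
  show "1 * a = a" by (rule cr_eqI) (simp add: Rep_ops good_unitl Rep_cr_good)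
  show "a + b + c = a + (b + c)" by (rule cr_eqI) (simp add: Rep_ops oplus_def add.assoc)
  show "a + b = b + a" by (rule cr_eqI) (simp add: Rep_ops oplus_def add.commute)
  show "0 + a = a" by (rule cr_eqI) (simp add: Rep_ops oplus_def zeroop_eq)
  show "- a + a = 0" by (rule cr_eqI) (simp add: Rep_ops oplus_def osc_def zeroop_eq)
  show "a - b = a + - b" by (rule cr_eqI) (simp add: Rep_ops)
  show "(a + b) * c = a * c + b * c" by (rule cr_eqI) (simp add: Rep_ops oplus_def o_def)
  show "(0::'a cr) \<noteq> 1"
  proof
    assume eq: "(0::'a cr) = 1"
    define C :: "'a op set" where "C = {(\<lambda>x i. c * x i) | c. True}"
    define u :: "'a op" where "u = (\<lambda>x i. 1 * x i)"
    have uC: "u \<in> C" unfolding C_def u_def by blast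
    have gk: "goodk (C, u)"
      unfolding goodk_def fst_conv snd_conv
    proof (intro conjI ballI)
      show "u \<in> C" by (rule uC)
      show "zeroop \<in> C" unfolding C_def zeroop_eq by (rule CollectI, rule exI[of _ 0]) simp
    next
      fix a b assume a: "a \<in> C" and b: "b \<in> C"
      then obtain c d where c: "a = (\<lambda>x i. c * x i)" and d: "b = (\<lambda>x i. d * x i)" unfolding C_def by blast
      show "oplus a b \<in> C" unfolding C_def c d oplus_def
        by (rule CollectI, rule exI[of _ "c + d"]) (simp add: algebra_simps)
      show "a \<circ> b \<in> C" unfolding C_def c d
        by (rule CollectI, rule exI[of _ "c * d"]) (simp add: o_def algebra_simps)
      show "a \<circ> b = b \<circ> a" unfolding c d by (simp add: o_def algebra_simps)
    next
      fix a assume a: "a \<in> C"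
      then obtain c where c: "a = (\<lambda>x i. c * x i)" unfolding C_def by blast
      show "osc (-1) a \<in> C" unfolding C_def c osc_def
        by (rule CollectI, rule exI[of _ "- c"]) simp
      show "u \<circ> a = a" unfolding u_def c by (simp add: o_def)
      show "a \<circ> zeroop = zeroop" unfolding c zeroop_eq by (simp add: o_def)
    next
      fix a b e assume a: "a \<in> C" and b: "b \<in> C" and e: "e \<in> C"
      then obtain c where c: "a = (\<lambda>x i. c * x i)" unfolding C_def by blast
      show "a \<circ> oplus b e = oplus (a \<circ> b) (a \<circ> e)" unfolding c oplus_def
        by (simp add: o_def algebra_simps)
    qed
    have "Rep_cr (0::'a cr) (C, u) = Rep_cr 1 (C, u)" using eq by simp
    hence "zeroop = u" using gk by (simp add: Rep_ops)
    hence "zeroop (\<lambda>i. 1) = u (\<lambda>i. 1)" by simp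
    thus False unfolding zeroop_eq u_def by (simp add: fun_eq_iff)
  qed
qed

end


lemma oplus_comp: "oplus P Q \<circ> Z = oplus (P \<circ> Z) (Q \<circ> Z)"
  by (simp add: oplus_def o_def)
lemma osc_comp: "osc c P \<circ> Z = osc c (P \<circ> Z)"
  by (simp add: osc_def o_def)
lemma osc_one[simp]: "osc 1 P = P"
  by (simp add: osc_def)
lemma op_diff_eq: "op_diff U V = oplus U (osc (-1) V)"
  by (simp add: op_diff_def oplus_def osc_def)

lemma sw_oplus: "L \<in> bounded_ops \<Longrightarrow> X \<in> bounded_ops \<Longrightarrow> Y \<in> bounded_ops \<Longrightarrow>
   L \<circ> oplus X Y \<circ> Z = oplus (L \<circ> X \<circ> Z) (L \<circ> Y \<circ> Z)"
  by (simp add: comp_oplus_right oplus_comp)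
lemma sw_osc: "L \<in> bounded_ops \<Longrightarrow> X \<in> bounded_ops \<Longrightarrow>
   L \<circ> osc c X \<circ> Z = osc c (L \<circ> X \<circ> Z)"
  by (simp add: comp_osc_right osc_comp)

lemma idem_assoc: "E \<circ> E = E \<Longrightarrow> P \<circ> E \<circ> E = P \<circ> E"
  by (metis comp_assoc)

locale tIn =
  fixes R :: "'i op set" and n :: nat and E :: "nat \<Rightarrow> 'i op" and W :: "nat \<Rightarrow> 'i op"
  assumes vn: "von_neumann_algebra R"
  and n1: "1 \<le> n"
  and Eab: "\<And>k. k < n \<Longrightarrow> abelian_projection R (E k)"
  and Eorth: "\<And>j k. j < n \<Longrightarrow> k < n \<Longrightarrow> j \<noteq> k \<Longrightarrow> E j \<circ> E k = zeroop"
  and Esum: "(\<lambda>x i. \<Sum>k<n. E k x i) = idop"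
  and WR: "\<And>k. k < n \<Longrightarrow> W k \<in> R"
  and WW1: "\<And>k. k < n \<Longrightarrow> adj (W k) \<circ> W k = E 0"
  and WW2: "\<And>k. k < n \<Longrightarrow> W k \<circ> adj (W k) = E k"
begin

abbreviation "E0 \<equiv> E 0"
abbreviation "W' k \<equiv> adj (W k)"

lemma R_bo: "X \<in> R \<Longrightarrow> X \<in> bounded_ops"
  using vn unfolding von_neumann_algebra_def by blast
lemma R_idop: "idop \<in> R"
  using vn unfolding von_neumann_algebra_def by blast
lemma R_comp: "X \<in> R \<Longrightarrow> Y \<in> R \<Longrightarrow> X \<circ> Y \<in> R"
  using vn unfolding von_neumann_algebra_def by blast
lemma R_adj: "X \<in> R \<Longrightarrow> adj X \<in> R"
  using vn unfolding von_neumann_algebra_def by blast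
lemma R_lin: "X \<in> R \<Longrightarrow> Y \<in> R \<Longrightarrow> (\<lambda>x i. c * X x i + Y x i) \<in> R"
  using vn unfolding von_neumann_algebra_def by blast
lemma R_oplus: "X \<in> R \<Longrightarrow> Y \<in> R \<Longrightarrow> oplus X Y \<in> R"
  using R_lin[of X Y 1] by (simp add: oplus_def)
lemma R_zero: "zeroop \<in> R"
proof -
  have "(\<lambda>x i. (-1) * idop x i + idop x i) \<in> R" by (rule R_lin[OF R_idop R_idop])
  thus ?thesis by (simp add: zeroop_eq)
qed
lemma R_osc: "X \<in> R \<Longrightarrow> osc c X \<in> R"
  using R_lin[OF _ R_zero, of X c] by (simp add: osc_def zeroop_eq)

lemma E_R: "k < n \<Longrightarrow> E k \<in> R"
  using Eab unfolding abelian_projection_def is_projection_def by blast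
lemma E_idem: "k < n \<Longrightarrow> E k \<circ> E k = E k"
  using Eab unfolding abelian_projection_def is_projection_def by blast
lemma n0: "0 < n" using n1 by simp
lemma E0_R: "E0 \<in> R" using E_R n0 by blast
lemma E0_idem: "E0 \<circ> E0 = E0" using E_idem n0 by blast
lemma E0_ab: "A \<in> R \<Longrightarrow> B \<in> R \<Longrightarrow> (E0 \<circ> A \<circ> E0) \<circ> (E0 \<circ> B \<circ> E0) = (E0 \<circ> B \<circ> E0) \<circ> (E0 \<circ> A \<circ> E0)"
  using Eab[OF n0] unfolding abelian_projection_def by blast
lemma W'R: "k < n \<Longrightarrow> W' k \<in> R" using R_adj WR by blast

lemma WEW: "k < n \<Longrightarrow> W k \<circ> E0 \<circ> W' k = E k"
proof -
  assume k: "k < n"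
  have "W k \<circ> E0 \<circ> W' k = W k \<circ> (W' k \<circ> W k) \<circ> W' k"
    using WW1[OF k] by simp
  also have "\<dots> = (W k \<circ> W' k) \<circ> (W k \<circ> W' k)"
    by (simp add: o_assoc)
  also have "\<dots> = E k" using WW2[OF k] E_idem[OF k] by simp
  finally show ?thesis .
qed
lemma E0W': "k < n \<Longrightarrow> E0 \<circ> W' k = W' k \<circ> E k"
  using WW1 WW2 by (metis comp_assoc)
lemma WE0: "k < n \<Longrightarrow> W k \<circ> E0 = E k \<circ> W k"
  using WW1 WW2 by (metis comp_assoc)

definition t :: "nat \<Rightarrow> nat \<Rightarrow> 'i op \<Rightarrow> 'i op" where
  "t j k X = (E0 \<circ> W' j) \<circ> X \<circ> (W k \<circ> E0)"

definition AR :: "'i op set" where "AR = {E0 \<circ> X \<circ> E0 | X. X \<in> R}"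
definition kA :: "'i op set \<times> 'i op" where "kA = (AR, E0)"

lemma AR_R: "a \<in> AR \<Longrightarrow> a \<in> R"
  unfolding AR_def using R_comp E0_R by blast
lemma AR_bo: "a \<in> AR \<Longrightarrow> a \<in> bounded_ops"
  using AR_R R_bo by blast

lemma t_AR: "j < n \<Longrightarrow> k < n \<Longrightarrow> X \<in> R \<Longrightarrow> t j k X \<in> AR"
  unfolding AR_def t_def
  by (rule CollectI, rule exI[of _ "W' j \<circ> X \<circ> W k"]) (simp add: o_assoc R_comp W'R WR)

lemma t_R: "j < n \<Longrightarrow> k < n \<Longrightarrow> X \<in> R \<Longrightarrow> t j k X \<in> R"
  using t_AR AR_R by blast

lemma good_kA: "goodk kA"
  unfolding goodk_def kA_def fst_conv snd_conv
proof (intro conjI ballI)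
  show "E0 \<in> AR" unfolding AR_def
    by (rule CollectI, rule exI[of _ idop]) (simp add: R_idop comp_idop_right R_bo E0_R E0_idem)
  show "zeroop \<in> AR" unfolding AR_def
    by (rule CollectI, rule exI[of _ zeroop]) (simp add: R_zero comp_zero_right comp_zero_left R_bo E0_R)
next
  fix a b assume a: "a \<in> AR" and b: "b \<in> AR"
  then obtain X Y where X: "X \<in> R" "a = E0 \<circ> X \<circ> E0" and Y: "Y \<in> R" "b = E0 \<circ> Y \<circ> E0"
    unfolding AR_def by blast
  show "oplus a b \<in> AR" unfolding AR_def
    by (rule CollectI, rule exI[of _ "oplus X Y"])
       (simp add: X Y R_oplus sw_oplus R_bo E0_R)
  show "a \<circ> b \<in> AR" unfolding AR_def
    by (rule CollectI, rule exI[of _ "X \<circ> E0 \<circ> Y"])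
       (simp add: X Y R_comp E0_R o_assoc idem_assoc[OF E0_idem])
  show "a \<circ> b = b \<circ> a" unfolding X Y by (rule E0_ab[OF X(1) Y(1)])
next
  fix a assume a: "a \<in> AR"
  then obtain X where X: "X \<in> R" "a = E0 \<circ> X \<circ> E0" unfolding AR_def by blast
  show "osc (-1) a \<in> AR" unfolding AR_def
    by (rule CollectI, rule exI[of _ "osc (-1) X"])
       (simp add: X R_osc sw_osc R_bo E0_R)
  show "E0 \<circ> a = a" unfolding X by (simp add: o_assoc E0_idem)
  show "a \<circ> zeroop = zeroop" using a AR_bo comp_zero_right by blast
next
  fix a b c assume a: "a \<in> AR" and b: "b \<in> AR" and c: "c \<in> AR"
  show "a \<circ> oplus b c = oplus (a \<circ> b) (a \<circ> c)"
    by (rule comp_oplus_right) (use a b c AR_bo in auto)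
qed

definition pi :: "'i cr \<Rightarrow> 'i op" where "pi f = Rep_cr f kA"
definition emb :: "'i op \<Rightarrow> 'i cr" where "emb a = Abs_cr (\<lambda>k. if k = kA then a else zeroop)"

lemma pi_emb: assumes a: "a \<in> AR" shows "pi (emb a) = a"
proof -
  have "Rep_cr (Abs_cr (\<lambda>k. if k = kA then a else zeroop) :: 'i cr) = (\<lambda>k. if k = kA then a else zeroop)"
  proof (rule Abs_cr_inverse')
    fix k :: "'i op set \<times> 'i op" assume "goodk k"
    then show "(if k = kA then a else zeroop) \<in> fst k" using a good_zero[of k] by (simp add: kA_def)
  next
    fix k :: "'i op set \<times> 'i op" assume "\<not> goodk k"
    then show "(if k = kA then a else zeroop) = zeroop" using good_kA by auto
  qed
  thus ?thesis unfolding pi_def emb_def by simp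
qed

lemma pi_AR: "pi f \<in> AR"
  unfolding pi_def using Rep_cr_good[OF good_kA] by (simp add: kA_def)
lemma pi_R: "pi f \<in> R" using pi_AR AR_R by blast
lemma pi_bo: "pi f \<in> bounded_ops" using pi_AR AR_bo by blast

lemma pi_zero: "pi 0 = zeroop" unfolding pi_def by (simp add: Rep_ops)
lemma pi_one: "pi 1 = E0" unfolding pi_def using good_kA by (simp add: Rep_ops kA_def)
lemma pi_plus: "pi (f + g) = oplus (pi f) (pi g)" unfolding pi_def by (simp add: Rep_ops)
lemma pi_times: "pi (f * g) = pi f \<circ> pi g" unfolding pi_def by (simp add: Rep_ops)
lemma pi_uminus: "pi (- f) = osc (-1) (pi f)" unfolding pi_def by (simp add: Rep_ops)
lemma pi_minus: "pi (f - g) = oplus (pi f) (osc (-1) (pi g))" unfolding pi_def by (simp add: Rep_ops)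

lemma pi_sum: "finite F \<Longrightarrow> pi (sum f F) = (\<lambda>x i. \<Sum>l\<in>F. pi (f l) x i)"
proof (induction F rule: finite_induct)
  case empty
  then show ?case by (simp add: pi_zero zeroop_eq)
next
  case (insert a F)
  then show ?case by (simp add: pi_plus oplus_def)
qed

lemma pi_prod_cong: "finite F \<Longrightarrow> (\<And>i. i \<in> F \<Longrightarrow> pi (f i) = pi (g i)) \<Longrightarrow> pi (prod f F) = pi (prod g F)"
proof (induction F rule: finite_induct)
  case empty
  then show ?case by simp
next
  case (insert a F)
  then show ?case by (simp add: pi_times)
qed

lemma pi_det_cong:
  assumes A: "A \<in> carrier_mat n n" and B: "B \<in> carrier_mat n n"
    and eq: "\<And>j k. j < n \<Longrightarrow> k < n \<Longrightarrow> pi (A $$ (j, k)) = pi (B $$ (j, k))"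
  shows "pi (Determinant.det A) = pi (Determinant.det B)"
proof -
  have "pi (of_int (sign p) * (\<Prod>i = 0..<n. A $$ (i, p i))) = pi (of_int (sign p) * (\<Prod>i = 0..<n. B $$ (i, p i)))"
    if p: "p permutes {0..<n}" for p
  proof -
    have "pi (\<Prod>i = 0..<n. A $$ (i, p i)) = pi (\<Prod>i = 0..<n. B $$ (i, p i))"
    proof (rule pi_prod_cong)
      fix i assume "i \<in> {0..<n}"
      then show "pi (A $$ (i, p i)) = pi (B $$ (i, p i))"
        using eq permutes_in_image[OF p] by simp
    qed simp
    thus ?thesis by (simp add: pi_times)
  qed
  thus ?thesis
    unfolding det_def'[OF A] det_def'[OF B]
    by (simp add: pi_sum finite_permutations)
qed

end


lemma osc_osc: "osc a (osc b X) = osc (a * b) X"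
  by (simp add: osc_def mult.assoc)

context tIn
begin

lemma Pbo: "j < n \<Longrightarrow> X \<in> R \<Longrightarrow> E0 \<circ> W' j \<circ> X \<in> R"
  using R_comp E0_R W'R by blast

lemma t_mult:
  assumes j: "j < n" and k: "k < n" and X: "X \<in> R" and Y: "Y \<in> R"
  shows "(\<lambda>x i. \<Sum>l<n. (t j l X \<circ> t l k Y) x i) = t j k (X \<circ> Y)"
proof -
  define P where "P = E0 \<circ> W' j \<circ> X"
  define Q where "Q = Y \<circ> (W k \<circ> E0)"
  have PR: "P \<in> R" unfolding P_def using Pbo[OF j X] .
  have QR: "Q \<in> R" unfolding Q_def using R_comp[OF Y R_comp[OF WR[OF k] E0_R]] .
  have Pbo: "P \<in> bounded_ops" using PR R_bo by blast
  have eq: "t j l X \<circ> t l k Y = P \<circ> E l \<circ> Q" if l: "l < n" for l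
  proof -
    have "t j l X \<circ> t l k Y = P \<circ> (W l \<circ> E0 \<circ> W' l) \<circ> Q"
      unfolding t_def P_def Q_def by (simp add: o_assoc idem_assoc[OF E0_idem])
    also have "\<dots> = P \<circ> E l \<circ> Q" using WEW[OF l] by simp
    finally show ?thesis .
  qed
  have "(\<lambda>x i. \<Sum>l<n. (t j l X \<circ> t l k Y) x i) = (\<lambda>x i. \<Sum>l<n. P (E l (Q x)) i)"
    by (intro ext sum.cong) (simp_all add: eq)
  also have "\<dots> = (\<lambda>x. (P \<circ> (\<lambda>x i. \<Sum>l<n. E l x i)) (Q x))"
    by (subst comp_sum_right[OF Pbo]) (simp_all add: E_R R_bo)
  also have "\<dots> = (\<lambda>x. (P \<circ> idop) (Q x))" by (simp only: Esum)
  also have "P \<circ> idop = P" using comp_idop_right[OF Pbo] .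
  finally show ?thesis unfolding P_def Q_def t_def by (simp add: comp_def)
qed

lemma t_idop:
  assumes j: "j < n" and k: "k < n"
  shows "t j k idop = (if j = k then E0 else zeroop)"
proof -
  have Lbo: "E0 \<circ> W' j \<in> bounded_ops" using R_comp[OF E0_R W'R[OF j]] R_bo by blast
  have "t j k idop = (E0 \<circ> W' j) \<circ> (W k \<circ> E0)"
    unfolding t_def using comp_idop_right[OF Lbo] by simp
  also have "\<dots> = (if j = k then E0 else zeroop)"
  proof (cases "j = k")
    case True
    have "(E0 \<circ> W' j) \<circ> (W k \<circ> E0) = E0 \<circ> (W' j \<circ> W j) \<circ> E0" using True by (simp add: o_assoc)
    also have "\<dots> = E0" using WW1[OF j] E0_idem by (simp add: o_assoc)
    finally show ?thesis using True by simp
  next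
    case False
    have "(E0 \<circ> W' j) \<circ> (W k \<circ> E0) = (W' j \<circ> E j) \<circ> (E k \<circ> W k)"
      using E0W'[OF j] WE0[OF k] by simp
    also have "\<dots> = W' j \<circ> (E j \<circ> E k) \<circ> W k" by (simp add: o_assoc)
    also have "\<dots> = zeroop" using Eorth[OF j k False] comp_zero_right[OF R_bo[OF W'R[OF j]]]
      by (simp add: comp_zero_left)
    finally show ?thesis using False by simp
  qed
  finally show ?thesis .
qed

lemma t_osc: "j < n \<Longrightarrow> X \<in> R \<Longrightarrow> t j k (osc c X) = osc c (t j k X)"
  unfolding t_def by (rule sw_osc) (use Pbo[OF _ R_idop] R_bo R_comp E0_R W'R in auto)

lemma t_oplus: "j < n \<Longrightarrow> X \<in> R \<Longrightarrow> Y \<in> R \<Longrightarrow> t j k (oplus X Y) = oplus (t j k X) (t j k Y)"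
  unfolding t_def by (rule sw_oplus) (use R_bo R_comp E0_R W'R in auto)

definition M :: "'i op \<Rightarrow> 'i cr mat" where
  "M X = Matrix.mat n n (\<lambda>(j, k). emb (t j k X))"

lemma M_carrier: "M X \<in> carrier_mat n n"
  unfolding M_def by simp

lemma M_index: "j < n \<Longrightarrow> k < n \<Longrightarrow> M X $$ (j, k) = emb (t j k X)"
  unfolding M_def by simp

lemma pi_M: "j < n \<Longrightarrow> k < n \<Longrightarrow> X \<in> R \<Longrightarrow> pi (M X $$ (j, k)) = t j k X"
  by (simp add: M_index pi_emb t_AR)

definition DD :: "'i op \<Rightarrow> 'i op" where "DD X = pi (Determinant.det (M X))"

lemma DD_mult_cr: assumes X: "X \<in> R" and Y: "Y \<in> R"
  shows "pi (Determinant.det (M (X \<circ> Y))) = pi (Determinant.det (M X) * Determinant.det (M Y))"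
proof -
  have "pi (Determinant.det (M (X \<circ> Y))) = pi (Determinant.det (M X * M Y))"
  proof (rule pi_det_cong[OF M_carrier])
    show "M X * M Y \<in> carrier_mat n n" using M_carrier by (rule mult_carrier_mat) (rule M_carrier)
  next
    fix j k assume j: "j < n" and k: "k < n"
    have "(M X * M Y) $$ (j, k) = (\<Sum>l\<in>{0..<n}. M X $$ (j, l) * M Y $$ (l, k))"
      using j k M_carrier[of X] M_carrier[of Y] by (simp add: Matrix.scalar_prod_def)
    hence "pi ((M X * M Y) $$ (j, k)) = (\<lambda>x i. \<Sum>l\<in>{0..<n}. pi (M X $$ (j, l) * M Y $$ (l, k)) x i)"
      by (simp add: pi_sum)
    also have "\<dots> = (\<lambda>x i. \<Sum>l<n. (t j l X \<circ> t l k Y) x i)"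
      by (intro ext sum.cong) (auto simp: pi_times pi_M j k X Y)
    also have "\<dots> = t j k (X \<circ> Y)" by (rule t_mult[OF j k X Y])
    finally show "pi (M (X \<circ> Y) $$ (j, k)) = pi ((M X * M Y) $$ (j, k))"
      using pi_M[OF j k R_comp[OF X Y]] by simp
  qed
  also have "\<dots> = pi (Determinant.det (M X) * Determinant.det (M Y))"
    by (simp add: det_mult[OF M_carrier M_carrier])
  finally show ?thesis .
qed

lemma DD_mult: "X \<in> R \<Longrightarrow> Y \<in> R \<Longrightarrow> DD (X \<circ> Y) = DD X \<circ> DD Y"
  unfolding DD_def using DD_mult_cr by (simp add: pi_times)

lemma oscE0_AR: "osc c E0 \<in> AR"
proof -
  have "E0 \<circ> osc c idop \<circ> E0 = osc c (E0 \<circ> idop \<circ> E0)"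
    by (rule sw_osc) (simp_all add: E0_R R_bo R_idop)
  also have "E0 \<circ> idop \<circ> E0 = E0" using comp_idop_right[OF R_bo[OF E0_R]] E0_idem by simp
  finally have eq: "E0 \<circ> osc c idop \<circ> E0 = osc c E0" .
  show ?thesis unfolding AR_def
    by (rule CollectI, rule exI[of _ "osc c idop"]) (simp add: eq R_osc R_idop)
qed

lemma pi_pow: "pi (emb (osc c E0) ^ m) = osc (c ^ m) E0"
proof (induction m)
  case 0
  then show ?case by (simp add: pi_one)
next
  case (Suc m)
  have "pi (emb (osc c E0) ^ Suc m) = osc c E0 \<circ> osc (c ^ m) E0"
    using Suc by (simp add: pi_times pi_emb oscE0_AR)
  also have "\<dots> = osc c (osc (c ^ m) (E0 \<circ> E0))"
    by (simp add: osc_comp comp_osc_right R_bo E0_R)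
  also have "\<dots> = osc (c ^ Suc m) E0" by (simp add: osc_osc E0_idem)
  finally show ?case .
qed

lemma DD_scalar: "DD (osc c idop) = osc (c ^ n) E0"
proof -
  define N where "N = Matrix.mat n n (\<lambda>(j, k). if j = k then emb (osc c E0) else 0)"
  have Nc: "N \<in> carrier_mat n n" unfolding N_def by simp
  have "pi (Determinant.det (M (osc c idop))) = pi (Determinant.det N)"
  proof (rule pi_det_cong[OF M_carrier Nc])
    fix j k assume j: "j < n" and k: "k < n"
    have "pi (M (osc c idop) $$ (j, k)) = osc c (t j k idop)"
      using pi_M[OF j k R_osc[OF R_idop]] t_osc[OF j R_idop] by simp
    also have "\<dots> = pi (N $$ (j, k))"
      using j k by (simp add: t_idop N_def pi_emb oscE0_AR pi_zero)
    finally show "pi (M (osc c idop) $$ (j, k)) = pi (N $$ (j, k))" .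
  qed
  also have "Determinant.det N = emb (osc c E0) ^ n"
  proof -
    have "Determinant.det N = prod_list (diag_mat N)"
      by (rule det_lower_triangular[OF _ Nc]) (simp add: N_def)
    also have "\<dots> = (\<Prod>i = 0..<n. N $$ (i, i))" using Nc by (simp add: prod_list_diag_prod)
    also have "\<dots> = (\<Prod>i = 0..<n. emb (osc c E0))" by (rule prod.cong) (simp_all add: N_def)
    finally show ?thesis by simp
  qed
  finally show ?thesis unfolding DD_def by (simp add: pi_pow)
qed

lemma DD_idop: "DD idop = E0"
  using DD_scalar[of 1] by simp

lemma sym_props: "S \<in> symmetries R \<Longrightarrow> S \<in> R \<and> S \<circ> S = idop"
  unfolding symmetries_def unitaries_def by auto

lemma sym4:
  assumes V: "V \<in> sym_products R 4"
  shows "V \<in> R \<and> DD V \<circ> DD V = E0"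
proof -
  obtain ss where ss: "V = foldr (\<circ>) ss idop" "length ss = 4" "set ss \<subseteq> symmetries R"
    using V unfolding sym_products_def by blast
  then obtain a b c d where abcd: "ss = [a, b, c, d]"
    by (auto simp: numeral_eq_Suc length_Suc_conv)
  have sa: "a \<in> R" "a \<circ> a = idop" using ss(3) abcd sym_props by auto
  have sb: "b \<in> R" "b \<circ> b = idop" using ss(3) abcd sym_props by auto
  have sc: "c \<in> R" "c \<circ> c = idop" using ss(3) abcd sym_props by auto
  have sd: "d \<in> R" "d \<circ> d = idop" using ss(3) abcd sym_props by auto
  have V': "V = a \<circ> (b \<circ> (c \<circ> d))"
    using ss(1) abcd comp_idop_right[OF R_bo[OF sd(1)]] by simp
  have VR: "V \<in> R" unfolding V' using sa sb sc sd R_comp by blast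
  let ?d = "\<lambda>X. Determinant.det (M X)"
  have sq: "pi (?d X * ?d X) = E0" if "X \<in> R" "X \<circ> X = idop" for X
    using DD_mult_cr[OF that(1) that(1)] that(2) DD_idop unfolding DD_def by simp
  have "DD V = DD a \<circ> (DD b \<circ> (DD c \<circ> DD d))"
    unfolding V' using sa sb sc sd by (simp add: DD_mult R_comp)
  hence "DD V = pi (?d a * (?d b * (?d c * ?d d)))"
    by (simp add: pi_times DD_def)
  hence "DD V \<circ> DD V = pi ((?d a * (?d b * (?d c * ?d d))) * (?d a * (?d b * (?d c * ?d d))))"
    by (simp add: pi_times)
  also have "(?d a * (?d b * (?d c * ?d d))) * (?d a * (?d b * (?d c * ?d d)))
     = (?d a * ?d a) * ((?d b * ?d b) * ((?d c * ?d c) * (?d d * ?d d)))"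
    by (simp add: ac_simps)
  also have "pi \<dots> = E0"
    using sq[OF sa] sq[OF sb] sq[OF sc] sq[OF sd] by (simp add: pi_times E0_idem)
  finally have "DD V \<circ> DD V = E0" .
  thus ?thesis using VR by simp
qed

end


lemma nn_prod:
  fixes NN :: "'a::comm_ring_1 \<Rightarrow> real" and a b :: "'b \<Rightarrow> 'a"
  assumes mult: "\<And>x y. NN (x * y) \<le> NN x * NN y"
    and add: "\<And>x y. NN (x + y) \<le> NN x + NN y"
    and neg: "\<And>x. NN (- x) \<le> NN x"
    and nn: "\<And>x. 0 \<le> NN x"
    and z: "NN 0 = 0"
    and F: "finite F"
    and ab: "\<And>i. i \<in> F \<Longrightarrow> NN (a i) \<le> K \<and> NN (b i) \<le> K \<and> NN (a i - b i) \<le> e"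
    and K1: "1 \<le> K" and c0: "NN 1 \<le> c0" and e0: "0 \<le> e"
  shows "NN (prod a F) \<le> c0 * K ^ card F \<and> NN (prod b F) \<le> c0 * K ^ card F \<and>
         NN (prod a F - prod b F) \<le> real (card F) * c0 * K ^ card F * e"
  using F ab
proof (induction F rule: finite_induct)
  case empty
  show ?case using c0 z by simp
next
  case (insert i F)
  define m where "m = card F"
  define A where "A = prod a F"
  define B where "B = prod b F"
  have c00: "0 \<le> c0" using nn[of 1] c0 by linarith
  have K0: "0 \<le> K" using K1 by simp
  have IH: "NN A \<le> c0 * K ^ m" "NN B \<le> c0 * K ^ m" "NN (A - B) \<le> real m * c0 * K ^ m * e"
    using insert.IH insert.prems unfolding A_def B_def m_def by auto
  have ai: "NN (a i) \<le> K" "NN (b i) \<le> K" "NN (a i - b i) \<le> e" using insert.prems by auto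
  have cF: "card (insert i F) = Suc m" using insert.hyps unfolding m_def by simp
  have pa: "prod a (insert i F) = a i * A" "prod b (insert i F) = b i * B"
    using insert.hyps unfolding A_def B_def by simp_all
  have b1: "NN (a i * A) \<le> c0 * K ^ Suc m"
  proof -
    have "NN (a i * A) \<le> NN (a i) * NN A" by (rule mult)
    also have "\<dots> \<le> K * (c0 * K ^ m)" by (rule mult_mono[OF ai(1) IH(1) K0 nn])
    finally show ?thesis by (simp add: algebra_simps)
  qed
  have b2: "NN (b i * B) \<le> c0 * K ^ Suc m"
  proof -
    have "NN (b i * B) \<le> NN (b i) * NN B" by (rule mult)
    also have "\<dots> \<le> K * (c0 * K ^ m)" by (rule mult_mono[OF ai(2) IH(2) K0 nn])
    finally show ?thesis by (simp add: algebra_simps)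
  qed
  have b3: "NN (a i * A - b i * B) \<le> real (Suc m) * c0 * K ^ Suc m * e"
  proof -
    have "a i * A - b i * B = a i * (A - B) + (a i - b i) * B" by (simp add: algebra_simps)
    hence "NN (a i * A - b i * B) \<le> NN (a i * (A - B)) + NN ((a i - b i) * B)" using add by simp
    also have "\<dots> \<le> NN (a i) * NN (A - B) + NN (a i - b i) * NN B" by (intro add_mono mult)
    also have "\<dots> \<le> K * (real m * c0 * K ^ m * e) + e * (c0 * K ^ m)"
      by (intro add_mono mult_mono ai IH nn K0 e0)
    also have "\<dots> \<le> K * (real m * c0 * K ^ m * e) + K * (e * (c0 * K ^ m))"
    proof -
      have "0 \<le> e * (c0 * K ^ m)" using e0 c00 K0 by simp
      hence "1 * (e * (c0 * K ^ m)) \<le> K * (e * (c0 * K ^ m))" by (rule mult_right_mono[OF K1])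
      thus ?thesis by simp
    qed
    also have "\<dots> = real (Suc m) * c0 * K ^ Suc m * e" by (simp add: algebra_simps)
    finally show ?thesis .
  qed
  show ?case unfolding cF pa using b1 b2 b3 by simp
qed

lemma nn_sum:
  fixes NN :: "'a::comm_ring_1 \<Rightarrow> real"
  assumes add: "\<And>x y. NN (x + y) \<le> NN x + NN y" and z: "NN 0 = 0" and F: "finite F"
  shows "NN (sum f F) \<le> (\<Sum>i\<in>F. NN (f i))"
  using F
proof (induction F rule: finite_induct)
  case empty then show ?case using z by simp
next
  case (insert a F)
  then show ?case using add[of "f a" "sum f F"] by simp
qed

lemma nn_det:
  fixes NN :: "'a::comm_ring_1 \<Rightarrow> real"
  assumes mult: "\<And>x y. NN (x * y) \<le> NN x * NN y"
    and add: "\<And>x y. NN (x + y) \<le> NN x + NN y"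
    and neg: "\<And>x. NN (- x) \<le> NN x"
    and nn: "\<And>x. 0 \<le> NN x"
    and z: "NN 0 = 0"
    and A: "A \<in> carrier_mat n n" and B: "B \<in> carrier_mat n n"
    and ab: "\<And>j k. j < n \<Longrightarrow> k < n \<Longrightarrow> NN (A $$ (j, k)) \<le> K \<and> NN (B $$ (j, k)) \<le> K \<and> NN (A $$ (j, k) - B $$ (j, k)) \<le> e"
    and K1: "1 \<le> K" and c0: "NN 1 \<le> c0" and e0: "0 \<le> e"
  shows "NN (Determinant.det A) \<le> fact n * (c0 * K ^ n) \<and>
         NN (Determinant.det A - Determinant.det B) \<le> fact n * (real n * c0 * K ^ n * e)"
proof -
  let ?P = "{p. p permutes {0..<n}}"
  have fP: "finite ?P" by (simp add: finite_permutations)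
  have cP: "card ?P = fact n" by (rule card_permutations) simp_all
  have sg: "NN (of_int (sign p) * x) \<le> NN x" for p x
  proof -
    have "of_int (sign p) \<in> {1, -1 :: 'a}" by (simp add: sign_def)
    then show ?thesis using neg[of x] by auto
  qed
  have pb: "NN (\<Prod>i = 0..<n. A $$ (i, p i)) \<le> c0 * K ^ n \<and> NN (\<Prod>i = 0..<n. B $$ (i, p i)) \<le> c0 * K ^ n \<and>
     NN ((\<Prod>i = 0..<n. A $$ (i, p i)) - (\<Prod>i = 0..<n. B $$ (i, p i))) \<le> real n * c0 * K ^ n * e"
    if p: "p \<in> ?P" for p
    using nn_prod[OF mult add neg nn z, of "{0..<n}" "\<lambda>i. A $$ (i, p i)" K "\<lambda>i. B $$ (i, p i)" e c0]
      ab permutes_in_image[of p "{0..<n}"] p K1 c0 e0 by auto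
  have "NN (Determinant.det A) \<le> (\<Sum>p\<in>?P. NN (of_int (sign p) * (\<Prod>i = 0..<n. A $$ (i, p i))))"
    unfolding det_def'[OF A] by (rule nn_sum[OF add z fP])
  also have "\<dots> \<le> (\<Sum>p\<in>?P. c0 * K ^ n)"
    by (rule sum_mono) (use sg pb order_trans in blast)
  also have "\<dots> = fact n * (c0 * K ^ n)" using cP by simp
  finally have 1: "NN (Determinant.det A) \<le> fact n * (c0 * K ^ n)" .
  have "Determinant.det A - Determinant.det B =
     (\<Sum>p\<in>?P. of_int (sign p) * ((\<Prod>i = 0..<n. A $$ (i, p i)) - (\<Prod>i = 0..<n. B $$ (i, p i))))"
    unfolding det_def'[OF A] det_def'[OF B] by (simp add: sum_subtractf[symmetric] right_diff_distrib)
  hence "NN (Determinant.det A - Determinant.det B) \<le>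
     (\<Sum>p\<in>?P. NN (of_int (sign p) * ((\<Prod>i = 0..<n. A $$ (i, p i)) - (\<Prod>i = 0..<n. B $$ (i, p i)))))"
    using nn_sum[OF add z fP] by simp
  also have "\<dots> \<le> (\<Sum>p\<in>?P. real n * c0 * K ^ n * e)"
    by (rule sum_mono) (use sg pb order_trans in blast)
  also have "\<dots> = fact n * (real n * c0 * K ^ n * e)" using cP by simp
  finally show ?thesis using 1 by simp
qed


lemma adj_unique:
  assumes S: "S \<in> bounded_ops" and adjS: "is_adjoint T S"
  shows "adj T = S"
  unfolding adj_def
proof (rule the_equality)
  show "S \<in> bounded_ops \<and> is_adjoint T S" using S adjS by blast
next
  fix S' assume S': "S' \<in> bounded_ops \<and> is_adjoint T S'"
  show "S' = S"
  proof
    fix y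
    show "S' y = S y"
    proof (cases "y \<in> l2")
      case True
      show ?thesis
      proof
        fix j
        have "S' y j = cinner (ev j) (S' y)" by (simp add: cinner_ev)
        also have "\<dots> = cinner (T (ev j)) y" using S' True ev_l2 unfolding is_adjoint_def by metis
        also have "\<dots> = cinner (ev j) (S y)" using adjS True ev_l2 unfolding is_adjoint_def by metis
        also have "\<dots> = S y j" by (simp add: cinner_ev)
        finally show "S' y j = S y j" .
      qed
    next
      case False
      then show ?thesis using bo_nl2[OF S False] bo_nl2[of S' y] S' False by simp
    qed
  qed
qed

lemma osc_idop_apply: "x \<in> l2 \<Longrightarrow> osc c idop x = (\<lambda>i. c * x i)"
  by (simp add: osc_def idop_def)

lemma scalar_adjoint: "is_adjoint (osc c idop) (osc (cnj c) idop)"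
  unfolding is_adjoint_def
proof (intro ballI)
  fix x y :: "'i \<Rightarrow> complex" assume x: "x \<in> l2" and y: "y \<in> l2"
  have "cinner (osc c idop x) y = (\<Sum>\<^sub>\<infinity>i. cnj c * (cnj (x i) * y i))"
    unfolding cinner_def osc_idop_apply[OF x] by (simp add: mult.assoc)
  also have "\<dots> = cnj c * cinner x y" unfolding cinner_def by (rule infsum_cmult_right')
  finally have 1: "cinner (osc c idop x) y = cnj c * cinner x y" .
  have "cinner x (osc (cnj c) idop y) = (\<Sum>\<^sub>\<infinity>i. cnj c * (cnj (x i) * y i))"
    unfolding cinner_def osc_idop_apply[OF y] by (simp add: ac_simps)
  also have "\<dots> = cnj c * cinner x y" unfolding cinner_def by (rule infsum_cmult_right')
  finally show "cinner (osc c idop x) y = cinner x (osc (cnj c) idop y)" using 1 by simp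
qed

context tIn
begin

definition NN :: "'i cr \<Rightarrow> real" where "NN f = opnorm (pi f)"

lemma opnorm_zeroop: "opnorm (zeroop :: 'i op) = 0"
proof -
  have "opnorm (zeroop :: 'i op) \<le> 0" by (rule opnorm_le) (simp_all add: zeroop_def)
  thus ?thesis using opnorm_nonneg[OF R_bo[OF R_zero]] by simp
qed

lemma NN_mult: "NN (x * y) \<le> NN x * NN y"
  unfolding NN_def pi_times by (rule opnorm_comp[OF pi_bo pi_bo])
lemma NN_add: "NN (x + y) \<le> NN x + NN y"
  unfolding NN_def pi_plus by (rule opnorm_add[OF pi_bo pi_bo])
lemma NN_neg: "NN (- x) \<le> NN x"
  unfolding NN_def pi_uminus using opnorm_osc[OF pi_bo, of "-1" x] by simp
lemma NN_nn: "0 \<le> NN x"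
  unfolding NN_def by (rule opnorm_nonneg[OF pi_bo])
lemma NN_z: "NN 0 = 0"
  unfolding NN_def pi_zero by (rule opnorm_zeroop)
lemma NN_one: "NN 1 = opnorm E0"
  unfolding NN_def pi_one ..

definition cL :: real where "cL = (\<Sum>j<n. opnorm (E0 \<circ> W' j))"
definition cR :: real where "cR = (\<Sum>k<n. opnorm (W k \<circ> E0))"

lemma cL_ge: "j < n \<Longrightarrow> opnorm (E0 \<circ> W' j) \<le> cL"
  unfolding cL_def
  by (rule member_le_sum) (auto intro!: opnorm_nonneg R_bo R_comp E0_R W'R)
lemma cR_ge: "k < n \<Longrightarrow> opnorm (W k \<circ> E0) \<le> cR"
  unfolding cR_def
  by (rule member_le_sum) (auto intro!: opnorm_nonneg R_bo R_comp E0_R WR)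
lemma cL_nn: "0 \<le> cL"
  unfolding cL_def by (rule sum_nonneg) (auto intro!: opnorm_nonneg R_bo R_comp E0_R W'R)
lemma cR_nn: "0 \<le> cR"
  unfolding cR_def by (rule sum_nonneg) (auto intro!: opnorm_nonneg R_bo R_comp E0_R WR)

lemma opnorm_t: assumes j: "j < n" and k: "k < n" and X: "X \<in> R"
  shows "opnorm (t j k X) \<le> (cL * cR) * opnorm X"
proof -
  have L: "E0 \<circ> W' j \<in> bounded_ops" using R_bo R_comp E0_R W'R j by blast
  have Rr: "W k \<circ> E0 \<in> bounded_ops" using R_bo R_comp E0_R WR k by blast
  have Xb: "X \<in> bounded_ops" using R_bo X by blast
  have LX: "(E0 \<circ> W' j) \<circ> X \<in> bounded_ops" using R_bo R_comp E0_R W'R j X by blast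
  have "opnorm (t j k X) \<le> opnorm ((E0 \<circ> W' j) \<circ> X) * opnorm (W k \<circ> E0)"
    unfolding t_def by (rule opnorm_comp[OF LX Rr])
  also have "\<dots> \<le> (opnorm (E0 \<circ> W' j) * opnorm X) * opnorm (W k \<circ> E0)"
    by (rule mult_right_mono[OF opnorm_comp[OF L Xb] opnorm_nonneg[OF Rr]])
  also have "\<dots> \<le> (cL * opnorm X) * cR"
    by (intro mult_mono cL_ge j cR_ge k opnorm_nonneg Xb Rr mult_nonneg_nonneg cL_nn) simp_all
  finally show ?thesis by (simp add: algebra_simps)
qed

lemma E0_nonzero: "\<exists>x\<in>l2. E0 x \<noteq> (\<lambda>i. 0)"
proof (rule ccontr)
  assume "\<not> (\<exists>x\<in>l2. E0 x \<noteq> (\<lambda>i. 0))"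
  hence z: "\<forall>x\<in>l2. E0 x = (\<lambda>i. 0)" by blast
  have E0z: "E0 = zeroop"
  proof
    fix x show "E0 x = zeroop x"
      using z bo_nl2[OF R_bo[OF E0_R]] by (cases "x \<in> l2") (auto simp: zeroop_def)
  qed
  have Ekz: "E k = zeroop" if k: "k < n" for k
  proof -
    have "E k = W k \<circ> E0 \<circ> W' k" using WEW[OF k] by simp
    also have "\<dots> = zeroop" unfolding E0z
      using comp_zero_right[OF R_bo[OF WR[OF k]]] by (simp add: comp_zero_left)
    finally show ?thesis .
  qed
  have "idop = (\<lambda>x i. \<Sum>k<n. E k x i)" using Esum by simp
  also have "\<dots> = (\<lambda>x i. 0)" by (intro ext) (simp add: Ekz zeroop_def)
  finally have z: "idop = (\<lambda>(x::'i \<Rightarrow> complex) (i::'i). (0::complex))" .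
  have "ev (undefined::'i) = idop (ev undefined)" by (simp add: idop_def ev_l2)
  also have "\<dots> = (\<lambda>i. 0)" by (simp add: z)
  finally show False using ev_nonzero[of "undefined :: 'i"] by simp
qed

lemma not_dense: "\<not> norm_dense_in (sym_products R 4) (unitaries R)"
proof
  assume dense: "norm_dense_in (sym_products R 4) (unitaries R)"
  define \<omega> where "\<omega> = cis (Transcendental.pi / (2 * real n))"
  have \<omega>n: "\<omega> ^ n = \<i>"
  proof -
    have "\<omega> ^ n = cis (real n * (Transcendental.pi / (2 * real n)))" unfolding \<omega>_def by (rule Complex.DeMoivre)
    also have "real n * (Transcendental.pi / (2 * real n)) = Transcendental.pi / 2" using n0 by (simp add: field_simps)
    finally show ?thesis by (simp add: cis_pi_half)
  qed
  have \<omega>u1: "cnj \<omega> * \<omega> = 1" unfolding \<omega>_def by (simp add: cis_cnj cis_mult)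
  have \<omega>u2: "\<omega> * cnj \<omega> = 1" using \<omega>u1 by (simp add: mult.commute)
  define U0 :: "'i op" where "U0 = osc \<omega> idop"
  have U0R: "U0 \<in> R" unfolding U0_def by (rule R_osc[OF R_idop])
  have adjU0: "adj U0 = osc (cnj \<omega>) idop"
    unfolding U0_def by (rule adj_unique[OF R_bo[OF R_osc[OF R_idop]] scalar_adjoint])
  have oo: "osc a (idop :: 'i op) \<circ> osc b idop = osc (a * b) idop" for a b
    using comp_idop_left[OF R_bo[OF R_osc[OF R_idop]], of b] by (simp add: osc_comp osc_osc)
  have h1: "adj U0 \<circ> U0 = idop"
  proof -
    have "adj U0 \<circ> U0 = osc (cnj \<omega>) idop \<circ> U0" by (simp only: adjU0)
    also have "\<dots> = osc (cnj \<omega>) idop \<circ> osc \<omega> idop" by (simp only: U0_def)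
    also have "\<dots> = idop" by (simp only: oo \<omega>u1 osc_one)
    finally show ?thesis .
  qed
  have h2: "U0 \<circ> adj U0 = idop"
  proof -
    have "U0 \<circ> adj U0 = U0 \<circ> osc (cnj \<omega>) idop" by (simp only: adjU0)
    also have "\<dots> = osc \<omega> idop \<circ> osc (cnj \<omega>) idop" by (simp only: U0_def)
    also have "\<dots> = idop" by (simp only: oo \<omega>u2 osc_one)
    finally show ?thesis .
  qed
  have U0u: "U0 \<in> unitaries R"
    unfolding unitaries_def by (rule CollectI) (intro conjI U0R h1 h2)
  define c0 where "c0 = opnorm E0"
  define c1 where "c1 = cL * cR"
  define K where "K = max 1 (c1 * (opnorm U0 + 1))"
  define c2 where "c2 = opnorm (osc 2 E0)"
  define Q where "Q = fact n * (real n * c0 * K ^ n) * (2 * (fact n * (c0 * K ^ n)))"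
  define P where "P = Q * c1"
  define \<epsilon> where "\<epsilon> = min 1 (c2 / (2 * (P + 1)))"
  have c00: "0 \<le> c0" unfolding c0_def by (rule opnorm_nonneg[OF R_bo[OF E0_R]])
  have c10: "0 \<le> c1" unfolding c1_def using cL_nn cR_nn by simp
  have K1: "1 \<le> K" unfolding K_def by simp
  have Q0: "0 \<le> Q" unfolding Q_def using c00 K1 by simp
  have P0: "0 \<le> P" unfolding P_def using Q0 c10 by simp
  have c2pos: "0 < c2"
  proof -
    obtain x where x: "x \<in> l2" "E0 x \<noteq> (\<lambda>i. 0)" using E0_nonzero by blast
    have "osc 2 E0 x \<noteq> (\<lambda>i. 0)"
    proof
      assume "osc 2 E0 x = (\<lambda>i. 0)"
      hence "E0 x = (\<lambda>i. 0)" by (simp add: osc_def fun_eq_iff)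
      thus False using x(2) by simp
    qed
    thus ?thesis unfolding c2_def by (rule opnorm_pos[OF R_bo[OF R_osc[OF E0_R]] x(1)])
  qed
  have eps: "0 < \<epsilon>" unfolding \<epsilon>_def using c2pos P0 by simp
  have "\<forall>e>0. \<exists>V\<in>sym_products R 4. opnorm (op_diff U0 V) < e"
    using dense U0u unfolding norm_dense_in_def by (rule bspec)
  hence "0 < \<epsilon> \<longrightarrow> (\<exists>V\<in>sym_products R 4. opnorm (op_diff U0 V) < \<epsilon>)" by (rule spec)
  from this eps have "\<exists>V\<in>sym_products R 4. opnorm (op_diff U0 V) < \<epsilon>" by (rule mp)
  then obtain V where V: "V \<in> sym_products R 4" and close: "opnorm (op_diff U0 V) < \<epsilon>"
    by (rule bexE)
  have VR: "V \<in> R" and VV: "DD V \<circ> DD V = E0" using sym4[OF V] by auto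
  define D where "D = oplus V (osc (-1) U0)"
  have DR: "D \<in> R" unfolding D_def by (intro R_oplus R_osc VR U0R)
  have D_eq: "D = osc (-1) (op_diff U0 V)" unfolding D_def by (simp add: op_diff_def oplus_def osc_def)
  have dR: "op_diff U0 V \<in> R" unfolding op_diff_eq by (intro R_oplus R_osc VR U0R)
  have "opnorm D \<le> cmod (-1) * opnorm (op_diff U0 V)"
    unfolding D_eq by (rule opnorm_osc[OF R_bo[OF dR]])
  hence nD: "opnorm D < \<epsilon>" using close by simp
  have e1: "\<epsilon> \<le> 1" unfolding \<epsilon>_def by simp
  have V_eq: "V = oplus U0 D" unfolding D_def by (simp add: oplus_def osc_def)
  have "opnorm V \<le> opnorm U0 + opnorm D"
    unfolding V_eq by (rule opnorm_add[OF R_bo[OF U0R] R_bo[OF DR]])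
  hence nV: "opnorm V \<le> opnorm U0 + 1" using nD e1 by simp
  define e where "e = c1 * opnorm D"
  have e0: "0 \<le> e" unfolding e_def using c10 opnorm_nonneg[OF R_bo[OF DR]] by simp
  have nU0: "0 \<le> opnorm U0" by (rule opnorm_nonneg[OF R_bo[OF U0R]])
  have entries: "NN (M V $$ (j, k)) \<le> K \<and> NN (M U0 $$ (j, k)) \<le> K \<and> NN (M V $$ (j, k) - M U0 $$ (j, k)) \<le> e"
    if j: "j < n" and k: "k < n" for j k
  proof (intro conjI)
    have "NN (M V $$ (j, k)) = opnorm (t j k V)" unfolding NN_def using pi_M[OF j k VR] by simp
    also have "\<dots> \<le> c1 * opnorm V" unfolding c1_def by (rule opnorm_t[OF j k VR])
    also have "\<dots> \<le> c1 * (opnorm U0 + 1)" by (rule mult_left_mono[OF nV c10])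
    also have "\<dots> \<le> K" unfolding K_def by simp
    finally show "NN (M V $$ (j, k)) \<le> K" .
  next
    have "NN (M U0 $$ (j, k)) = opnorm (t j k U0)" unfolding NN_def using pi_M[OF j k U0R] by simp
    also have "\<dots> \<le> c1 * opnorm U0" unfolding c1_def by (rule opnorm_t[OF j k U0R])
    also have "\<dots> \<le> c1 * (opnorm U0 + 1)" by (rule mult_left_mono) (use c10 in simp_all)
    also have "\<dots> \<le> K" unfolding K_def by simp
    finally show "NN (M U0 $$ (j, k)) \<le> K" .
  next
    have "pi (M V $$ (j, k) - M U0 $$ (j, k)) = oplus (t j k V) (osc (-1) (t j k U0))"
      unfolding pi_minus pi_M[OF j k VR] pi_M[OF j k U0R] ..
    also have "\<dots> = t j k D" unfolding D_def t_oplus[OF j VR R_osc[OF U0R]] t_osc[OF j U0R] ..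
    finally have "NN (M V $$ (j, k) - M U0 $$ (j, k)) = opnorm (t j k D)" unfolding NN_def by simp
    also have "\<dots> \<le> c1 * opnorm D" unfolding c1_def by (rule opnorm_t[OF j k DR])
    finally show "NN (M V $$ (j, k) - M U0 $$ (j, k)) \<le> e" unfolding e_def .
  qed
  have entries': "NN (M U0 $$ (j, k)) \<le> K \<and> NN (M V $$ (j, k)) \<le> K \<and> NN (M U0 $$ (j, k) - M V $$ (j, k)) \<le> e"
    if j: "j < n" and k: "k < n" for j k
  proof -
    have "NN (M U0 $$ (j, k) - M V $$ (j, k)) = NN (- (M V $$ (j, k) - M U0 $$ (j, k)))" by simp
    also have "\<dots> \<le> NN (M V $$ (j, k) - M U0 $$ (j, k))" by (rule NN_neg)
    finally show ?thesis using entries[OF j k] by simp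
  qed
  define \<delta> where "\<delta> = Determinant.det (M V)"
  define \<eta> where "\<eta> = Determinant.det (M U0)"
  have c0': "NN 1 \<le> c0" unfolding c0_def NN_one by simp
  have b1: "NN \<delta> \<le> fact n * (c0 * K ^ n)" and b2: "NN (\<delta> - \<eta>) \<le> fact n * (real n * c0 * K ^ n * e)"
    using nn_det[OF NN_mult NN_add NN_neg NN_nn NN_z M_carrier M_carrier entries K1 c0' e0]
    unfolding \<delta>_def \<eta>_def by auto
  have b3: "NN \<eta> \<le> fact n * (c0 * K ^ n)"
    using nn_det[OF NN_mult NN_add NN_neg NN_nn NN_z M_carrier M_carrier entries' K1 c0' e0]
    unfolding \<eta>_def by auto
  have p1: "pi (\<delta> * \<delta>) = E0" using VV unfolding \<delta>_def DD_def by (simp add: pi_times)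
  have "pi (\<eta> * \<eta>) = DD U0 \<circ> DD U0" unfolding \<eta>_def DD_def by (simp add: pi_times)
  also have "\<dots> = osc \<i> E0 \<circ> osc \<i> E0" unfolding U0_def DD_scalar \<omega>n ..
  also have "\<dots> = osc \<i> (E0 \<circ> osc \<i> E0)" by (rule osc_comp)
  also have "E0 \<circ> osc \<i> E0 = osc \<i> (E0 \<circ> E0)" by (rule comp_osc_right[OF R_bo[OF E0_R] R_bo[OF E0_R]])
  also have "osc \<i> (osc \<i> (E0 \<circ> E0)) = osc (-1) E0" by (simp add: osc_osc E0_idem)
  finally have p2: "pi (\<eta> * \<eta>) = osc (-1) E0" .
  have rr: "(\<delta> - \<eta>) * (\<delta> + \<eta>) = \<delta> * \<delta> - \<eta> * \<eta>" by (simp add: algebra_simps)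
  have "pi ((\<delta> - \<eta>) * (\<delta> + \<eta>)) = oplus E0 (osc (-1) (osc (-1) E0))"
    unfolding rr pi_minus p1 p2 ..
  also have "\<dots> = osc 2 E0" by (simp add: oplus_def osc_def fun_eq_iff)
  finally have "c2 = NN ((\<delta> - \<eta>) * (\<delta> + \<eta>))" unfolding c2_def NN_def by simp
  also have "\<dots> \<le> NN (\<delta> - \<eta>) * NN (\<delta> + \<eta>)" by (rule NN_mult)
  also have "\<dots> \<le> (fact n * (real n * c0 * K ^ n * e)) * (2 * (fact n * (c0 * K ^ n)))"
  proof (rule mult_mono[OF b2 _ _ NN_nn])
    have "NN (\<delta> + \<eta>) \<le> NN \<delta> + NN \<eta>" by (rule NN_add)
    also have "\<dots> \<le> 2 * (fact n * (c0 * K ^ n))" using b1 b3 by simp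
    finally show "NN (\<delta> + \<eta>) \<le> 2 * (fact n * (c0 * K ^ n))" .
    show "0 \<le> fact n * (real n * c0 * K ^ n * e)" using c00 K1 e0 by simp
  qed
  also have "\<dots> = Q * e" unfolding Q_def by (simp add: mult_ac)
  also have "\<dots> \<le> Q * (c1 * \<epsilon>)" unfolding e_def
    by (rule mult_left_mono[OF mult_left_mono[OF less_imp_le[OF nD] c10] Q0])
  also have "\<dots> = P * \<epsilon>" unfolding P_def by (simp only: mult.assoc)
  also have "\<dots> \<le> P * (c2 / (2 * (P + 1)))"
    by (rule mult_left_mono[OF _ P0]) (unfold \<epsilon>_def, rule min.cobounded2)
  also have "\<dots> < c2"
  proof -
    have d: "0 < 2 * (P + 1)" using P0 by simp
    have pc: "0 \<le> P * c2" using P0 c2pos by simp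
    have "P * c2 < c2 * (2 * (P + 1))" using pc c2pos by (simp add: algebra_simps)
    hence "(P * c2) / (2 * (P + 1)) < c2" by (simp only: pos_divide_less_eq[OF d])
    thus ?thesis by simp
  qed
  finally show False by simp
qed

end

theorem corollary2p5:
  fixes R :: "'i op set" and n :: nat
  assumes "n \<ge> 1" and "type_I_n n R"
  shows "\<not> norm_dense_in (sym_products R 4) (unitaries R)"
proof -
  have vn: "von_neumann_algebra R" using assms(2) unfolding type_I_n_def by (rule conjunct1)
  have "\<exists>E :: nat \<Rightarrow> 'i op.
        (\<forall>k<n. abelian_projection R (E k)) \<and>
        (\<forall>j<n. \<forall>k<n. j \<noteq> k \<longrightarrow> E j \<circ> E k = zeroop) \<and>
        (\<forall>j<n. \<forall>k<n. mvn_equiv R (E j) (E k)) \<and>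
        (\<lambda>x i. \<Sum>k<n. E k x i) = idop"
    using assms(2) unfolding type_I_n_def by (rule conjunct2)
  then obtain E :: "nat \<Rightarrow> 'i op" where EE: "(\<forall>k<n. abelian_projection R (E k)) \<and>
        (\<forall>j<n. \<forall>k<n. j \<noteq> k \<longrightarrow> E j \<circ> E k = zeroop) \<and>
        (\<forall>j<n. \<forall>k<n. mvn_equiv R (E j) (E k)) \<and>
        (\<lambda>x i. \<Sum>k<n. E k x i) = idop"
    by (rule exE)
  have Eab: "\<forall>k<n. abelian_projection R (E k)" using EE by (rule conjunct1)
  have Eorth: "\<forall>j<n. \<forall>k<n. j \<noteq> k \<longrightarrow> E j \<circ> E k = zeroop" using EE[THEN conjunct2] by (rule conjunct1)
  have Eeq: "\<forall>j<n. \<forall>k<n. mvn_equiv R (E j) (E k)" using EE[THEN conjunct2, THEN conjunct2] by (rule conjunct1)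
  have Esum: "(\<lambda>x i. \<Sum>k<n. E k x i) = idop" using EE[THEN conjunct2, THEN conjunct2] by (rule conjunct2)
  have n0: "0 < n" using assms(1) by simp
  have "\<forall>k. \<exists>V. k < n \<longrightarrow> V \<in> R \<and> adj V \<circ> V = E 0 \<and> V \<circ> adj V = E k"
  proof
    fix k
    show "\<exists>V. k < n \<longrightarrow> V \<in> R \<and> adj V \<circ> V = E 0 \<and> V \<circ> adj V = E k"
    proof (cases "k < n")
      case True
      have "mvn_equiv R (E 0) (E k)" using Eeq[rule_format, OF n0 True] .
      then show ?thesis unfolding mvn_equiv_def Bex_def
        by (elim exE) (rule exI, rule impI, assumption)
    next
      case False
      then show ?thesis by simp
    qed
  qed
  then have "\<exists>W. \<forall>k. k < n \<longrightarrow> W k \<in> R \<and> adj (W k) \<circ> W k = E 0 \<and> W k \<circ> adj (W k) = E k"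
    by (rule choice)
  then obtain W where W: "\<forall>k. k < n \<longrightarrow> W k \<in> R \<and> adj (W k) \<circ> W k = E 0 \<and> W k \<circ> adj (W k) = E k"
    by (rule exE)
  have loc: "tIn R n E W"
  proof (unfold_locales)
    show "von_neumann_algebra R" by (rule vn)
    show "1 \<le> n" by (rule assms(1))
  next
    fix k assume k: "k < n"
    show "abelian_projection R (E k)" using Eab[rule_format, OF k] .
  next
    fix j k assume j: "j < n" and k: "k < n" and jk: "j \<noteq> k"
    show "E j \<circ> E k = zeroop" using Eorth[rule_format, OF j k jk] .
  next
    show "(\<lambda>x i. \<Sum>k<n. E k x i) = idop" by (rule Esum)
  next
    fix k assume k: "k < n"
    show "W k \<in> R" using W[rule_format, OF k] by (rule conjunct1)
  next
    fix k assume k: "k < n"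
    show "adj (W k) \<circ> W k = E 0" using W[rule_format, OF k, THEN conjunct2] by (rule conjunct1)
  next
    fix k assume k: "k < n"
    show "W k \<circ> adj (W k) = E k" using W[rule_format, OF k, THEN conjunct2] by (rule conjunct2)
  qed
  interpret tIn R n E W by (rule loc)
  show ?thesis by (rule not_dense)
qed


end
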